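(* Suppose $(\gamma^\sharp,\lambda^\sharp)$ is an eligible pair. Let $\lambda_{\rm Lasso}>\lambda^\sharp$ with $\lambda_{\rm Lasso}\|\gamma^\sharp\|_1\to0$, and let $$\gamma_{\rm Lasso}:=\arg\min_{c\in\mathbb{R}^{p-1}}\big\{\mathbb{E}(\mathbf{x}_1-\mathbf{x}_{-1}c)^2+2\lambda_{\rm Lasso}\|c\|_1\big\}$$ be the noiseless Lasso. Then $\|\Sigma_{-1,-1}^{1/2}(\gamma_{\rm Lasso}-\gamma^\sharp)\|_2^2\to0$. In addition, if $\lambda_{\rm Lasso}\ge2\lambda^\sharp$, then $(\gamma_{\rm Lasso},\lambda_{\rm Lasso})$ is an eligible pair.
   Context: Asymptotic framework: all quantities may depend on $n$; limits as $n\to\infty$. $\mathbf{x}=(\mathbf{x}_1,\dots,\mathbf{x}_p)$ is a zero-mean Gaussian row vector with nonsingular covariance $\Sigma$ (diagonal entries $1$, smallest eigenvalue bounded away from zero); $\mathbf{x}_{-1}=(\mathbf{x}_2,\dots,\mathbf{x}_p)$, $\Sigma_{-1,-1}=\mathbb{E}\mathbf{x}_{-1}^T\mathbf{x}_{-1}$, $\gamma^0:=\Sigma_{-1,-1}^{-1}\mathbb{E}\mathbf{x}_{-1}^T\mathbf{x}_1$. A pair $(\gamma,\lambda)$ with $\gamma\in\mathbb{R}^{p-1}$, $\lambda>0$ is eligible if $\|\Sigma_{-1,-1}(\gamma-\gamma^0)\|_\infty\le\lambda$ and $\lambda\|\gamma\|_1\to0$. *)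

theory Defs
  imports "HOL-Analysis.Analysis"
begin

(* Conventions: a p x p matrix is  S :: nat => nat => real  read on indices {0..<p};
   coordinate 0 is x_1, coordinates {1..<p} form x_{-1}.
   Vectors in R^{p-1} are functions  c :: nat => real  vanishing outside {1..<p}. *)

definition rvec :: "nat \<Rightarrow> (nat \<Rightarrow> real) set" where
  "rvec p = {c. \<forall>i. i \<notin> {1..<p} \<longrightarrow> c i = 0}"

definition is_eigenvalue :: "nat \<Rightarrow> (nat \<Rightarrow> nat \<Rightarrow> real) \<Rightarrow> real \<Rightarrow> bool" where
  "is_eigenvalue p S \<mu> \<longleftrightarrow> (\<exists>v. (\<forall>i. p \<le> i \<longrightarrow> v i = 0) \<and> (\<exists>i<p. v i \<noteq> 0)
       \<and> (\<forall>i<p. (\<Sum>j<p. S i j * v j) = \<mu> * v i))"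

definition nonsingular :: "nat \<Rightarrow> (nat \<Rightarrow> nat \<Rightarrow> real) \<Rightarrow> bool" where
  "nonsingular p S \<longleftrightarrow> (\<forall>v. (\<forall>i<p. (\<Sum>j<p. S i j * v j) = 0) \<longrightarrow> (\<forall>i<p. v i = 0))"

definition symmetric_mat :: "nat \<Rightarrow> (nat \<Rightarrow> nat \<Rightarrow> real) \<Rightarrow> bool" where
  "symmetric_mat p S \<longleftrightarrow> (\<forall>i<p. \<forall>j<p. S i j = S j i)"

definition SmulR :: "nat \<Rightarrow> (nat \<Rightarrow> nat \<Rightarrow> real) \<Rightarrow> (nat \<Rightarrow> real) \<Rightarrow> nat \<Rightarrow> real" where
  "SmulR p S c i = (\<Sum>j\<in>{1..<p}. S i j * c j)"

(* gamma^0 = Sigma_{-1,-1}^{-1} E x_{-1}^T x_1, the unique solution of Sigma_{-1,-1} g = Sigma_{-1,1} *)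
definition gamma0 :: "nat \<Rightarrow> (nat \<Rightarrow> nat \<Rightarrow> real) \<Rightarrow> nat \<Rightarrow> real" where
  "gamma0 p S = (THE g. g \<in> rvec p \<and> (\<forall>i\<in>{1..<p}. SmulR p S g i = S i 0))"

definition norm1 :: "nat \<Rightarrow> (nat \<Rightarrow> real) \<Rightarrow> real" where
  "norm1 p c = (\<Sum>i\<in>{1..<p}. \<bar>c i\<bar>)"

definition normInf :: "nat \<Rightarrow> (nat \<Rightarrow> real) \<Rightarrow> real" where
  "normInf p c = Max (insert 0 ((\<lambda>i. \<bar>c i\<bar>) ` {1..<p}))"

(* || Sigma_{-1,-1}^{1/2} v ||_2^2 = v^T Sigma_{-1,-1} v *)
definition quadS :: "nat \<Rightarrow> (nat \<Rightarrow> nat \<Rightarrow> real) \<Rightarrow> (nat \<Rightarrow> real) \<Rightarrow> real" where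
  "quadS p S v = (\<Sum>i\<in>{1..<p}. \<Sum>j\<in>{1..<p}. v i * S i j * v j)"

(* E (x_1 - x_{-1} c)^2 for a zero-mean vector x with covariance S *)
definition risk :: "nat \<Rightarrow> (nat \<Rightarrow> nat \<Rightarrow> real) \<Rightarrow> (nat \<Rightarrow> real) \<Rightarrow> real" where
  "risk p S c = S 0 0 - 2 * (\<Sum>i\<in>{1..<p}. c i * S i 0) + quadS p S c"

definition eligible :: "(nat \<Rightarrow> nat) \<Rightarrow> (nat \<Rightarrow> nat \<Rightarrow> nat \<Rightarrow> real)
    \<Rightarrow> (nat \<Rightarrow> nat \<Rightarrow> real) \<Rightarrow> (nat \<Rightarrow> real) \<Rightarrow> bool" where
  "eligible p S g lam \<longleftrightarrow>
     (\<forall>n. g n \<in> rvec (p n) \<and> 0 < lam n \<and>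
          normInf (p n) (SmulR (p n) (S n) (\<lambda>i. g n i - gamma0 (p n) (S n) i)) \<le> lam n)
     \<and> (\<lambda>n. lam n * norm1 (p n) (g n)) \<longlonglongrightarrow> 0"

end

theory Submission
  imports Defs "Jordan_Normal_Form.Determinant"
begin

lemma inv_exists:
  fixes f :: "nat \<Rightarrow> nat \<Rightarrow> real"
  assumes inj: "\<And>v. (\<forall>i<p. (\<Sum>j<p. f i j * v j) = 0) \<Longrightarrow> (\<forall>i<p. v i = 0)"
  shows "\<exists>B. \<forall>i<p. \<forall>k<p. (\<Sum>j<p. f i j * B j k) = (if i = k then 1 else 0)"
proof -
  define A where "A = mat p p (\<lambda>(i,j). f i j)"
  have A: "A \<in> carrier_mat p p" unfolding A_def by simp
  have dA: "Determinant.det A \<noteq> 0"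
  proof
    assume "Determinant.det A = 0"
    then obtain v where v: "v \<in> carrier_vec p" "v \<noteq> 0\<^sub>v p" "A *\<^sub>v v = 0\<^sub>v p"
      using det_0_iff_vec_prod_zero_field[OF A] by auto
    have "\<forall>i<p. (\<Sum>j<p. f i j * v $ j) = 0"
    proof (intro allI impI)
      fix i assume i: "i < p"
      have "(A *\<^sub>v v) $ i = 0" using v(3) i by simp
      moreover have "(A *\<^sub>v v) $ i = (\<Sum>j<p. f i j * v $ j)"
        using i v(1) unfolding A_def
        by (auto simp: mult_mat_vec_def scalar_prod_def lessThan_atLeast0 intro!: sum.cong)
      ultimately show "(\<Sum>j<p. f i j * v $ j) = 0" by simp
    qed
    from inj[OF this] have "\<forall>i<p. v $ i = 0" .
    then have "v = 0\<^sub>v p" using v(1) by (intro eq_vecI) auto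
    with v(2) show False by simp
  qed
  define B where "B = (\<lambda>j k. adj_mat A $$ (j,k) / Determinant.det A)"
  have "\<forall>i<p. \<forall>k<p. (\<Sum>j<p. f i j * B j k) = (if i = k then 1 else 0)"
  proof (intro allI impI)
    fix i k assume i: "i < p" and k: "k < p"
    have "(A * adj_mat A) $$ (i,k) = (Determinant.det A \<cdot>\<^sub>m 1\<^sub>m p) $$ (i,k)"
      using adj_mat(2)[OF A] by simp
    moreover have "(A * adj_mat A) $$ (i,k) = (\<Sum>j<p. f i j * adj_mat A $$ (j,k))"
      using i k adj_mat(1)[OF A] unfolding A_def
      by (auto simp: scalar_prod_def lessThan_atLeast0 intro!: sum.cong)
    ultimately have "(\<Sum>j<p. f i j * adj_mat A $$ (j,k)) = Determinant.det A * (if i = k then 1 else 0)"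
      using i k by simp
    then show "(\<Sum>j<p. f i j * B j k) = (if i = k then 1 else 0)"
    proof -
      have "(\<Sum>j<p. f i j * B j k) = (\<Sum>j<p. f i j * adj_mat A $$ (j,k)) / Determinant.det A"
        unfolding B_def by (simp add: sum_divide_distrib)
      then show ?thesis using dA \<open>(\<Sum>j<p. f i j * adj_mat A $$ (j,k)) = _\<close> by simp
    qed
  qed
  then show ?thesis by blast
qed

definition bl :: "nat \<Rightarrow> (nat \<Rightarrow> nat \<Rightarrow> real) \<Rightarrow> (nat \<Rightarrow> real) \<Rightarrow> (nat \<Rightarrow> real) \<Rightarrow> real" where
  "bl p S x y = (\<Sum>i<p. \<Sum>j<p. x i * S i j * y j)"

definition nq :: "nat \<Rightarrow> (nat \<Rightarrow> real) \<Rightarrow> real" where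
  "nq p x = (\<Sum>i<p. (x i)\<^sup>2)"

lemma nq_nonneg: "0 \<le> nq p x" unfolding nq_def by (simp add: sum_nonneg)

lemma nq_zero: "nq p x = 0 \<Longrightarrow> i < p \<Longrightarrow> x i = 0"
  unfolding nq_def by (subst (asm) sum_nonneg_eq_0_iff) auto

lemma bl_zero: "(\<And>i. i < p \<Longrightarrow> x i = 0) \<Longrightarrow> bl p S x y = 0"
  unfolding bl_def by simp

lemma bl_bound: "\<bar>bl p S x x\<bar> \<le> (\<Sum>i<p. \<Sum>j<p. \<bar>S i j\<bar>) * nq p x"
proof -
  have t: "\<bar>x i * S i j * x j\<bar> \<le> \<bar>S i j\<bar> * nq p x" if "i < p" "j < p" for i j
  proof -
    have a: "(x i)\<^sup>2 \<le> nq p x" unfolding nq_def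
      by (rule member_le_sum[where f="\<lambda>i. (x i)\<^sup>2"]) (use that in auto)
    have b: "(x j)\<^sup>2 \<le> nq p x" unfolding nq_def
      by (rule member_le_sum[where f="\<lambda>i. (x i)\<^sup>2"]) (use that in auto)
    have "\<bar>x i * x j\<bar> \<le> nq p x"
    proof -
      have "2 * \<bar>x i\<bar> * \<bar>x j\<bar> \<le> (x i)\<^sup>2 + (x j)\<^sup>2"
        using sum_squares_bound[of "\<bar>x i\<bar>" "\<bar>x j\<bar>"] by (simp add: power2_eq_square)
      then show ?thesis using a b by (simp add: abs_mult)
    qed
    then have "\<bar>x i * x j\<bar> * \<bar>S i j\<bar> \<le> nq p x * \<bar>S i j\<bar>" by (rule mult_right_mono) simp
    then show ?thesis by (simp add: abs_mult mult.commute mult.left_commute)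
  qed
  have "\<bar>bl p S x x\<bar> \<le> (\<Sum>i<p. \<Sum>j<p. \<bar>x i * S i j * x j\<bar>)"
    unfolding bl_def by (rule order_trans[OF sum_abs]) (intro sum_mono sum_abs)
  also have "\<dots> \<le> (\<Sum>i<p. \<Sum>j<p. \<bar>S i j\<bar> * nq p x)"
    by (intro sum_mono t) auto
  also have "\<dots> = (\<Sum>i<p. \<Sum>j<p. \<bar>S i j\<bar>) * nq p x"
    by (simp add: sum_distrib_right)
  finally show ?thesis .
qed

lemma bl_sym: "symmetric_mat p S \<Longrightarrow> bl p S y x = bl p S x y"
  unfolding bl_def symmetric_mat_def
  by (subst sum.swap) (auto intro!: sum.cong simp: mult.commute mult.left_commute)

lemma bl_expand:
  assumes "symmetric_mat p S"
  shows "bl p S (\<lambda>i. x i + t * y i) (\<lambda>i. x i + t * y i)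
         = bl p S x x + 2 * t * bl p S x y + t\<^sup>2 * bl p S y y"
proof -
  have "bl p S (\<lambda>i. x i + t * y i) (\<lambda>i. x i + t * y i)
        = bl p S x x + t * bl p S x y + t * bl p S y x + t\<^sup>2 * bl p S y y"
    unfolding bl_def
    by (simp add: algebra_simps sum.distrib sum_distrib_left power2_eq_square)
  then show ?thesis using bl_sym[OF assms, of y x] by simp
qed

lemma bl_row: "bl p S x y = (\<Sum>i<p. x i * (\<Sum>j<p. S i j * y j))"
  unfolding bl_def by (simp add: sum_distrib_left mult.assoc)

lemma pd:
  fixes S :: "nat \<Rightarrow> nat \<Rightarrow> real"
  assumes p: "0 < p" and sym: "symmetric_mat p S" and d00: "S 0 0 = 1"
    and eig: "\<forall>\<mu>. is_eigenvalue p S \<mu> \<longrightarrow> c \<le> \<mu>"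
  shows "c * nq p x \<le> bl p S x x"
proof -
  define T where "T = {\<mu>. \<forall>x. \<mu> * nq p x \<le> bl p S x x}"
  define K where "K = (\<Sum>i<p. \<Sum>j<p. \<bar>S i j\<bar>)"
  have KT: "-K \<in> T" unfolding T_def
  proof (intro CollectI allI)
    fix x
    have "\<bar>bl p S x x\<bar> \<le> K * nq p x" unfolding K_def by (rule bl_bound)
    then show "- K * nq p x \<le> bl p S x x" by (simp add: abs_le_iff)
  qed
  define e0 :: "nat \<Rightarrow> real" where "e0 = (\<lambda>i. if i = 0 then 1 else 0)"
  have md: "\<And>(a::real) b. (if b then 1 else 0) * a = (if b then a else 0)"
    "\<And>(a::real) b. a * (if b then 1 else 0) = (if b then a else 0)" by auto
  have "nq p e0 = (\<Sum>i<p. e0 i)" unfolding nq_def by (rule sum.cong) (auto simp: e0_def)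
  also have "\<dots> = 1" using p by (simp add: e0_def)
  finally have "nq p e0 = 1" .
  moreover have "bl p S e0 e0 = 1" using p d00 unfolding bl_def e0_def
    by (simp add: md sum.delta sum.delta' cong: if_cong)
  ultimately have bdd: "\<mu> \<le> 1" if "\<mu> \<in> T" for \<mu>
  proof -
    from that have "\<mu> * nq p e0 \<le> bl p S e0 e0" unfolding T_def by blast
    then show ?thesis using \<open>nq p e0 = 1\<close> \<open>bl p S e0 e0 = 1\<close> by simp
  qed
  have bddT: "bdd_above T" using bdd by (intro bdd_aboveI[of _ 1]) auto
  define m where "m = Sup T"
  have mT: "m * nq p x \<le> bl p S x x" for x
  proof (cases "nq p x = 0")
    case True
    then have "bl p S x x = 0" by (intro bl_zero) (auto dest: nq_zero)
    then show ?thesis using True by simp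
  next
    case False
    then have pos: "0 < nq p x" using nq_nonneg[of p x] by linarith
    have "m \<le> bl p S x x / nq p x" unfolding m_def
    proof (rule cSup_least)
      show "T \<noteq> {}" using KT by blast
    next
      fix \<mu> assume "\<mu> \<in> T"
      then have "\<mu> * nq p x \<le> bl p S x x" unfolding T_def by blast
      then show "\<mu> \<le> bl p S x x / nq p x" using pos by (simp add: pos_le_divide_eq)
    qed
    then show ?thesis using pos by (simp add: pos_le_divide_eq)
  qed
  have "is_eigenvalue p S m"
  proof (rule ccontr)
    assume ne: "\<not> is_eigenvalue p S m"
    define f where "f = (\<lambda>i j. S i j - (if i = j then m else 0))"
    have fsym: "symmetric_mat p f" using sym unfolding symmetric_mat_def f_def by auto
    have frow: "(\<Sum>j<p. f i j * v j) = (\<Sum>j<p. S i j * v j) - m * v i" if "i < p" for i v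
    proof -
      have "(\<Sum>j<p. f i j * v j) = (\<Sum>j<p. S i j * v j - (if i = j then m * v j else 0))"
        unfolding f_def by (rule sum.cong) (auto simp: algebra_simps)
      also have "\<dots> = (\<Sum>j<p. S i j * v j) - m * v i" using that by (simp add: sum_subtractf sum.delta)
      finally show ?thesis .
    qed
    have inj: "\<forall>i<p. v i = 0" if h: "\<forall>i<p. (\<Sum>j<p. f i j * v j) = 0" for v
    proof (rule ccontr)
      assume "\<not> (\<forall>i<p. v i = 0)"
      define v' where "v' = (\<lambda>i. if i < p then v i else 0)"
      have "(\<Sum>j<p. S i j * v' j) = (\<Sum>j<p. S i j * v j)" for i
        unfolding v'_def by (rule sum.cong) auto
      then have "is_eigenvalue p S m" unfolding is_eigenvalue_def
        using \<open>\<not> (\<forall>i<p. v i = 0)\<close> h frow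
        by (intro exI[of _ v']) (auto simp: v'_def)
      with ne show False by simp
    qed
    obtain B where B: "\<forall>i<p. \<forall>k<p. (\<Sum>j<p. f i j * B j k) = (if i = k then 1 else 0)"
      using inv_exists[of p f] inj by blast
    define L where "L = (\<Sum>i<p. \<Sum>j<p. \<bar>B i j\<bar>)"
    have L0: "0 \<le> L" unfolding L_def by (simp add: sum_nonneg)
    define \<epsilon> where "\<epsilon> = 1 / (L + 1)"
    have \<epsilon>0: "0 < \<epsilon>" using L0 unfolding \<epsilon>_def by simp
    have \<epsilon>L: "\<epsilon> * L \<le> 1" using L0 unfolding \<epsilon>_def by (simp add: field_simps)
    have blf: "bl p f z z = bl p S z z - m * nq p z" for z
    proof -
      have "bl p f z z = (\<Sum>i<p. z i * ((\<Sum>j<p. S i j * z j) - m * z i))"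
        unfolding bl_row using frow by (intro sum.cong) auto
      also have "\<dots> = bl p S z z - m * nq p z"
        unfolding bl_row nq_def
        by (simp add: right_diff_distrib sum_subtractf sum_distrib_left power2_eq_square algebra_simps)
      finally show ?thesis .
    qed
    have psd: "0 \<le> bl p f z z" for z using blf mT[of z] by simp
    have "m + \<epsilon> \<in> T"
    proof -
      have "(m + \<epsilon>) * nq p x \<le> bl p S x x" for x
      proof -
        define y where "y = (\<lambda>j. \<Sum>k<p. B j k * x k)"
        have fy: "(\<Sum>j<p. f i j * y j) = x i" if "i < p" for i
        proof -
          have "(\<Sum>j<p. f i j * y j) = (\<Sum>j<p. \<Sum>k<p. f i j * B j k * x k)"
            unfolding y_def by (simp add: sum_distrib_left mult.assoc)
          also have "\<dots> = (\<Sum>k<p. \<Sum>j<p. f i j * B j k * x k)" by (rule sum.swap)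
          also have "\<dots> = (\<Sum>k<p. (\<Sum>j<p. f i j * B j k) * x k)" by (simp add: sum_distrib_right)
          also have "\<dots> = (\<Sum>k<p. (if i = k then 1 else 0) * x k)"
            using B that by (intro sum.cong) auto
          also have "\<dots> = x i" using that by (simp add: md sum.delta)
          finally show ?thesis .
        qed
        have xy: "bl p f x y = nq p x" unfolding bl_row nq_def
          using fy by (simp add: power2_eq_square)
        have yy: "bl p f y y = bl p B x x"
        proof -
          have "bl p f y y = (\<Sum>i<p. y i * x i)" unfolding bl_row
            by (rule sum.cong) (simp_all add: fy)
          also have "\<dots> = bl p B x x" unfolding bl_row y_def
            by (simp add: mult.commute)
          finally show ?thesis .
        qed
        have yyb: "bl p f y y \<le> L * nq p x" using yy bl_bound[of p B x] unfolding L_def by simp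
        have "0 \<le> bl p f (\<lambda>i. x i + (-\<epsilon>) * y i) (\<lambda>i. x i + (-\<epsilon>) * y i)" by (rule psd)
        also have "\<dots> = bl p f x x - 2 * \<epsilon> * nq p x + \<epsilon>\<^sup>2 * bl p f y y"
          using bl_expand[OF fsym, of x "-\<epsilon>" y] xy by simp
        finally have "2 * \<epsilon> * nq p x - \<epsilon>\<^sup>2 * bl p f y y \<le> bl p f x x" by simp
        moreover have "\<epsilon>\<^sup>2 * bl p f y y \<le> \<epsilon> * nq p x"
        proof -
          have "\<epsilon>\<^sup>2 * bl p f y y \<le> \<epsilon>\<^sup>2 * (L * nq p x)" using yyb by (simp add: mult_left_mono)
          also have "\<dots> = \<epsilon> * ((\<epsilon> * L) * nq p x)" by (simp add: power2_eq_square)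
          also have "\<dots> \<le> \<epsilon> * (1 * nq p x)" using \<epsilon>L \<epsilon>0 nq_nonneg[of p x]
            by (intro mult_left_mono mult_right_mono) auto
          finally show ?thesis by simp
        qed
        ultimately have "\<epsilon> * nq p x \<le> bl p f x x" by simp
        then show ?thesis using blf[of x] by (simp add: algebra_simps)
      qed
      then show ?thesis unfolding T_def by simp
    qed
    then have "m + \<epsilon> \<le> m" unfolding m_def using bddT by (rule cSup_upper)
    with \<epsilon>0 show False by simp
  qed
  then have "c \<le> m" using eig by blast
  then show ?thesis using mT[of x] nq_nonneg[of p x] by (meson mult_right_mono order_trans)
qed

lemma split0: "0 < (p::nat) \<Longrightarrow> (\<Sum>j<p. h j) = h 0 + (\<Sum>j\<in>{1..<p}. (h j :: real))"
proof -
  assume p: "0 < p"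
  have "{..<p} = insert 0 {1..<p}" using p by auto
  then show ?thesis by simp
qed

lemma rvec0: "v \<in> rvec p \<Longrightarrow> v 0 = 0" unfolding rvec_def by auto

lemma quadS_bl: "0 < p \<Longrightarrow> v \<in> rvec p \<Longrightarrow> quadS p S v = bl p S v v"
  unfolding quadS_def bl_def by (simp add: split0 rvec0)

lemma nq_rvec: "0 < p \<Longrightarrow> v \<in> rvec p \<Longrightarrow> nq p v = (\<Sum>i\<in>{1..<p}. (v i)\<^sup>2)"
  unfolding nq_def by (simp add: split0 rvec0)

lemma quadS_row: "quadS p S v = (\<Sum>i\<in>{1..<p}. v i * SmulR p S v i)"
  unfolding quadS_def SmulR_def by (simp add: sum_distrib_left mult.assoc)

lemma SmulR_diff: "SmulR p S (\<lambda>i. a i - b i) j = SmulR p S a j - SmulR p S b j"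
  unfolding SmulR_def by (simp add: sum_subtractf right_diff_distrib)

lemma normInf_ge: "i \<in> {1..<p} \<Longrightarrow> \<bar>v i\<bar> \<le> normInf p v"
  unfolding normInf_def by (rule Max_ge) auto

lemma normInf_le: "0 \<le> a \<Longrightarrow> (\<And>i. i \<in> {1..<p} \<Longrightarrow> \<bar>v i\<bar> \<le> a) \<Longrightarrow> normInf p v \<le> a"
  unfolding normInf_def by (subst Max_le_iff) auto

lemma norm1_nonneg: "0 \<le> norm1 p v" unfolding norm1_def by (simp add: sum_nonneg)

lemma pdR:
  assumes p: "0 < p" and sym: "symmetric_mat p S" and d00: "S 0 0 = 1"
    and eig: "\<forall>\<mu>. is_eigenvalue p S \<mu> \<longrightarrow> c \<le> \<mu>" and v: "v \<in> rvec p"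
  shows "c * (\<Sum>i\<in>{1..<p}. (v i)\<^sup>2) \<le> quadS p S v"
  using pd[OF p sym d00 eig, of v] quadS_bl[OF p v, of S] nq_rvec[OF p v] by simp

lemma risk_expand:
  assumes sym: "symmetric_mat p S"
  shows "risk p S (\<lambda>j. g j + t * w j) = risk p S g
          + 2 * t * (\<Sum>j\<in>{1..<p}. w j * (SmulR p S g j - S j 0)) + t\<^sup>2 * quadS p S w"
proof -
  let ?I = "{1..<p}"
  have q: "quadS p S (\<lambda>j. g j + t * w j) = quadS p S g
     + t * (\<Sum>i\<in>?I. \<Sum>j\<in>?I. g i * S i j * w j) + t * (\<Sum>i\<in>?I. \<Sum>j\<in>?I. w i * S i j * g j)
     + t\<^sup>2 * quadS p S w"
    unfolding quadS_def by (simp add: algebra_simps sum.distrib sum_distrib_left power2_eq_square)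
  have sw: "(\<Sum>i\<in>?I. \<Sum>j\<in>?I. g i * S i j * w j) = (\<Sum>i\<in>?I. \<Sum>j\<in>?I. w i * S i j * g j)"
  proof -
    have "(\<Sum>i\<in>?I. \<Sum>j\<in>?I. g i * S i j * w j) = (\<Sum>j\<in>?I. \<Sum>i\<in>?I. g i * S i j * w j)"
      by (rule sum.swap)
    also have "\<dots> = (\<Sum>j\<in>?I. \<Sum>i\<in>?I. w j * S j i * g i)"
      using sym unfolding symmetric_mat_def by (intro sum.cong refl) (auto simp: mult.commute mult.left_commute)
    finally show ?thesis .
  qed
  have row: "(\<Sum>i\<in>?I. \<Sum>j\<in>?I. w i * S i j * g j) = (\<Sum>j\<in>?I. w j * SmulR p S g j)"
    unfolding SmulR_def by (simp add: sum_distrib_left mult.assoc)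
  have lin: "(\<Sum>i\<in>?I. (g i + t * w i) * S i 0) = (\<Sum>i\<in>?I. g i * S i 0) + t * (\<Sum>i\<in>?I. w i * S i 0)"
    by (simp add: algebra_simps sum.distrib sum_distrib_left)
  have lin2: "(\<Sum>j\<in>?I. w j * (SmulR p S g j - S j 0)) = (\<Sum>j\<in>?I. w j * SmulR p S g j) - (\<Sum>j\<in>?I. w j * S j 0)"
    by (simp add: right_diff_distrib sum_subtractf)
  show ?thesis unfolding risk_def q lin lin2 sw row by (simp add: algebra_simps)
qed

lemma gamma0_prop:
  assumes p: "0 < p" and sym: "symmetric_mat p S" and d00: "S 0 0 = 1" and c0: "0 < c"
    and eig: "\<forall>\<mu>. is_eigenvalue p S \<mu> \<longrightarrow> c \<le> \<mu>"
  shows "gamma0 p S \<in> rvec p \<and> (\<forall>i\<in>{1..<p}. SmulR p S (gamma0 p S) i = S i 0)"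
proof -
  let ?I = "{1..<p}"
  have md: "\<And>(a::real) b. (if b then 1 else 0) * a = (if b then a else 0)"
    "\<And>(a::real) b. a * (if b then 1 else 0) = (if b then a else 0)" by auto
  have inj: "v = (\<lambda>_. 0)" if v: "v \<in> rvec p" and h: "\<forall>i\<in>?I. SmulR p S v i = 0" for v
  proof -
    have "quadS p S v = 0" unfolding quadS_row using h by simp
    then have "c * (\<Sum>i\<in>?I. (v i)\<^sup>2) \<le> 0" using pdR[OF p sym d00 eig v] by simp
    then have "(\<Sum>i\<in>?I. (v i)\<^sup>2) \<le> 0" using c0 by (simp add: mult_le_0_iff)
    then have "(\<Sum>i\<in>?I. (v i)\<^sup>2) = 0" by (simp add: order_antisym sum_nonneg)
    then have "\<forall>i\<in>?I. v i = 0" by (subst (asm) sum_nonneg_eq_0_iff) auto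
    then show ?thesis using v unfolding rvec_def by (intro ext) force
  qed
  define f :: "nat \<Rightarrow> nat \<Rightarrow> real" where
    "f = (\<lambda>i j. if i = 0 \<or> j = 0 then (if i = j then 1 else 0) else S i j)"
  have frow: "(\<Sum>j<p. f i j * v j) = (\<Sum>j\<in>?I. S i j * v j)" if "i \<in> ?I" for i v
  proof -
    have "(\<Sum>j<p. f i j * v j) = f i 0 * v 0 + (\<Sum>j\<in>?I. f i j * v j)" by (rule split0[OF p])
    also have "\<dots> = (\<Sum>j\<in>?I. S i j * v j)"
    proof -
      have "f i 0 = 0" using that by (simp add: f_def)
      moreover have "(\<Sum>j\<in>?I. f i j * v j) = (\<Sum>j\<in>?I. S i j * v j)"
        using that by (intro sum.cong) (auto simp: f_def)
      ultimately show ?thesis by simp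
    qed
    finally show ?thesis .
  qed
  have frow0: "(\<Sum>j<p. f 0 j * v j) = v 0" for v
  proof -
    have "(\<Sum>j<p. f 0 j * v j) = f 0 0 * v 0 + (\<Sum>j\<in>?I. f 0 j * v j)" by (rule split0[OF p])
    also have "\<dots> = v 0" unfolding f_def by simp
    finally show ?thesis .
  qed
  have finj: "\<forall>i<p. v i = 0" if h: "\<forall>i<p. (\<Sum>j<p. f i j * v j) = 0" for v
  proof -
    have "(\<Sum>j<p. f 0 j * v j) = 0" using h p by blast
    then have v0: "v 0 = 0" using frow0[of v] by simp
    define w where "w = (\<lambda>j. if j \<in> ?I then v j else 0)"
    have w: "w \<in> rvec p" unfolding w_def rvec_def by auto
    have "\<forall>i\<in>?I. SmulR p S w i = 0"
    proof
      fix i assume i: "i \<in> ?I"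
      have "SmulR p S w i = (\<Sum>j\<in>?I. S i j * v j)" unfolding SmulR_def w_def by (rule sum.cong) auto
      also have "\<dots> = 0" using frow[OF i, of v] h i by auto
      finally show "SmulR p S w i = 0" .
    qed
    from inj[OF w this] have w0: "w = (\<lambda>_. 0)" .
    have vI: "v j = 0" if "j \<in> ?I" for j
    proof -
      have "w j = 0" using w0 by simp
      then show ?thesis using that by (simp add: w_def)
    qed
    show ?thesis
    proof (intro allI impI)
      fix i assume "i < p"
      show "v i = 0"
      proof (cases "i = 0")
        case True then show ?thesis using v0 by simp
      next
        case False then show ?thesis using vI \<open>i < p\<close> by simp
      qed
    qed
  qed
  obtain B where B: "\<forall>i<p. \<forall>k<p. (\<Sum>j<p. f i j * B j k) = (if i = k then 1 else 0)"
    using inv_exists[of p f] finj by blast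
  define bb where "bb = (\<lambda>k. if k = 0 then 0 else S k 0)"
  define y where "y = (\<lambda>j. \<Sum>k<p. B j k * bb k)"
  have fy: "(\<Sum>j<p. f i j * y j) = bb i" if "i < p" for i
  proof -
    have "(\<Sum>j<p. f i j * y j) = (\<Sum>j<p. \<Sum>k<p. f i j * B j k * bb k)"
      unfolding y_def by (simp add: sum_distrib_left mult.assoc)
    also have "\<dots> = (\<Sum>k<p. \<Sum>j<p. f i j * B j k * bb k)" by (rule sum.swap)
    also have "\<dots> = (\<Sum>k<p. (\<Sum>j<p. f i j * B j k) * bb k)" by (simp add: sum_distrib_right)
    also have "\<dots> = (\<Sum>k<p. (if i = k then 1 else 0) * bb k)"
      using B that by (intro sum.cong) auto
    also have "\<dots> = bb i" using that by (simp add: md sum.delta)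
    finally show ?thesis .
  qed
  define g where "g = (\<lambda>j. if j \<in> ?I then y j else 0)"
  have g: "g \<in> rvec p" unfolding g_def rvec_def by auto
  have gS: "\<forall>i\<in>?I. SmulR p S g i = S i 0"
  proof
    fix i assume i: "i \<in> ?I"
    have "SmulR p S g i = (\<Sum>j\<in>?I. S i j * y j)" unfolding SmulR_def g_def by (rule sum.cong) auto
    also have "\<dots> = bb i" using frow[OF i, of y] fy[of i] i by auto
    also have "\<dots> = S i 0" using i unfolding bb_def by auto
    finally show "SmulR p S g i = S i 0" .
  qed
  have uniq: "g' = g" if g': "g' \<in> rvec p \<and> (\<forall>i\<in>?I. SmulR p S g' i = S i 0)" for g'
  proof -
    have "(\<lambda>i. g' i - g i) \<in> rvec p" using g g' unfolding rvec_def by auto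
    moreover have "\<forall>i\<in>?I. SmulR p S (\<lambda>i. g' i - g i) i = 0" using g' gS by (simp add: SmulR_diff)
    ultimately have "(\<lambda>i. g' i - g i) = (\<lambda>_. 0)" by (rule inj)
    then have "g' i - g i = 0" for i by (rule fun_cong[where x=i, THEN trans]) simp
    then show ?thesis by (intro ext) simp
  qed
  have "\<exists>!g. g \<in> rvec p \<and> (\<forall>i\<in>?I. SmulR p S g i = S i 0)"
    using g gS uniq by blast
  then show ?thesis unfolding gamma0_def by (rule theI')
qed

lemma step:
  assumes p: "0 < p" and sym: "symmetric_mat p S" and diag: "\<And>i. i < p \<Longrightarrow> S i i = 1"
    and c0: "0 < c" and eig: "\<forall>\<mu>. is_eigenvalue p S \<mu> \<longrightarrow> c \<le> \<mu>"
    and s: "s \<in> rvec p" and l0: "0 < l"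
    and sl: "normInf p (SmulR p S (\<lambda>i. s i - gamma0 p S i)) \<le> l"
    and ll: "l < lam" and g: "g \<in> rvec p"
    and gmin: "\<And>x. x \<in> rvec p \<Longrightarrow>
        risk p S g + 2 * lam * norm1 p g \<le> risk p S x + 2 * lam * norm1 p x"
  shows "0 \<le> quadS p S (\<lambda>i. g i - s i) \<and> quadS p S (\<lambda>i. g i - s i) \<le> 4 * (lam * norm1 p s)"
    and "2 * l \<le> lam \<Longrightarrow> normInf p (SmulR p S (\<lambda>i. g i - gamma0 p S i)) \<le> lam
          \<and> 0 \<le> lam * norm1 p g \<and> lam * norm1 p g \<le> 3 * (lam * norm1 p s)"
proof -
  let ?I = "{1..<p}"
  have d00: "S 0 0 = 1" using diag p by simp
  have G: "gamma0 p S \<in> rvec p" "\<forall>i\<in>?I. SmulR p S (gamma0 p S) i = S i 0"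
    using gamma0_prop[OF p sym d00 c0 eig] by auto
  define d where "d = (\<lambda>i. g i - s i)"
  have d: "d \<in> rvec p" using g s unfolding d_def rvec_def by auto
  have Qd0: "0 \<le> quadS p S d"
  proof -
    have "0 \<le> c * (\<Sum>i\<in>?I. (d i)\<^sup>2)" using c0 by (simp add: sum_nonneg)
    also have "\<dots> \<le> quadS p S d" by (rule pdR[OF p sym d00 eig d])
    finally show ?thesis .
  qed
  have r: "\<bar>SmulR p S s i - S i 0\<bar> \<le> l" if i: "i \<in> ?I" for i
  proof -
    have "\<bar>SmulR p S (\<lambda>i. s i - gamma0 p S i) i\<bar> \<le> l"
      using normInf_ge[OF i, of "SmulR p S (\<lambda>i. s i - gamma0 p S i)"] sl by linarith
    then show ?thesis using G(2) i by (simp add: SmulR_diff)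
  qed
  define X where "X = (\<Sum>j\<in>?I. d j * (SmulR p S s j - S j 0))"
  have nd: "norm1 p d \<le> norm1 p g + norm1 p s"
    unfolding norm1_def d_def by (simp add: sum.distrib[symmetric] sum_mono abs_triangle_ineq4)
  have Xb: "\<bar>X\<bar> \<le> l * norm1 p d"
  proof -
    have "\<bar>X\<bar> \<le> (\<Sum>j\<in>?I. \<bar>d j * (SmulR p S s j - S j 0)\<bar>)" unfolding X_def by (rule sum_abs)
    also have "\<dots> \<le> (\<Sum>j\<in>?I. \<bar>d j\<bar> * l)"
      by (intro sum_mono) (simp add: abs_mult mult_left_mono r)
    also have "\<dots> = l * norm1 p d" unfolding norm1_def by (simp add: sum_distrib_left mult.commute)
    finally show ?thesis .
  qed
  have gsd: "(\<lambda>j. s j + 1 * d j) = g" unfolding d_def by auto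
  have E: "risk p S g = risk p S s + 2 * X + quadS p S d"
    using risk_expand[OF sym, of s 1 d] unfolding gsd X_def by simp
  have A: "risk p S g + 2 * lam * norm1 p g \<le> risk p S s + 2 * lam * norm1 p s" by (rule gmin[OF s])
  have ng: "0 \<le> norm1 p g" and ns: "0 \<le> norm1 p s" by (rule norm1_nonneg)+
  have Xb2: "\<bar>X\<bar> \<le> l * norm1 p g + l * norm1 p s"
    using Xb mult_left_mono[OF nd, of l] l0 by (simp add: distrib_left)
  have lg: "l * norm1 p g \<le> lam * norm1 p g" using ll ng by (simp add: mult_right_mono)
  have ls: "l * norm1 p s \<le> lam * norm1 p s" using ll ns by (simp add: mult_right_mono)
  show "0 \<le> quadS p S (\<lambda>i. g i - s i) \<and> quadS p S (\<lambda>i. g i - s i) \<le> 4 * (lam * norm1 p s)"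
    using Qd0 E A Xb2 lg ls unfolding d_def[symmetric] by (simp add: abs_le_iff; linarith)
  assume l2: "2 * l \<le> lam"
  have lam0: "0 < lam" using l0 ll by simp
  have kkt: "\<bar>SmulR p S g i - S i 0\<bar> \<le> lam" if i: "i \<in> ?I" for i
  proof -
    define u where "u = SmulR p S g i - S i 0"
    define e :: "nat \<Rightarrow> real" where "e = (\<lambda>j. if j = i then 1 else 0)"
    have e: "e \<in> rvec p" using i unfolding e_def rvec_def by auto
    have md: "\<And>(a::real) b. (if b then 1 else 0) * a = (if b then a else 0)"
      "\<And>(a::real) b. a * (if b then 1 else 0) = (if b then a else 0)" by auto
    have eu: "(\<Sum>j\<in>?I. e j * (SmulR p S g j - S j 0)) = u"
      using i unfolding e_def u_def by (simp add: md sum.delta')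
    have qe: "quadS p S e = 1"
      using i diag unfolding e_def quadS_def by (simp add: md sum.delta')
    have key: "0 \<le> 2 * t * u + t\<^sup>2 + 2 * lam * \<bar>t\<bar>" for t
    proof -
      have n1: "norm1 p (\<lambda>j. g j + t * e j) \<le> norm1 p g + \<bar>t\<bar>"
      proof -
        have "norm1 p (\<lambda>j. g j + t * e j) \<le> (\<Sum>j\<in>?I. \<bar>g j\<bar> + \<bar>t\<bar> * e j)"
          unfolding norm1_def by (intro sum_mono) (auto simp: e_def abs_triangle_ineq)
        also have "\<dots> = norm1 p g + \<bar>t\<bar>" using i unfolding norm1_def e_def
          by (simp add: sum.distrib md sum.delta')
        finally show ?thesis .
      qed
      have "risk p S g + 2 * lam * norm1 p g
            \<le> risk p S (\<lambda>j. g j + t * e j) + 2 * lam * norm1 p (\<lambda>j. g j + t * e j)"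
        by (rule gmin) (use g e in \<open>auto simp: rvec_def\<close>)
      also have "\<dots> \<le> risk p S g + 2 * t * u + t\<^sup>2 + 2 * lam * (norm1 p g + \<bar>t\<bar>)"
        using risk_expand[OF sym, of g t e] eu qe n1 lam0 by simp
      finally show ?thesis by (simp add: algebra_simps)
    qed
    have "u \<le> lam"
    proof (rule ccontr)
      assume "\<not> u \<le> lam"
      then have h: "lam < u" by simp
      have "0 \<le> 2 * (lam - u) * u + (lam - u)\<^sup>2 + 2 * lam * \<bar>lam - u\<bar>" by (rule key)
      also have "\<dots> = - ((u - lam)\<^sup>2)" using h by (simp add: power2_eq_square algebra_simps)
      finally have "(u - lam)\<^sup>2 \<le> 0" by simp
      moreover have "0 < (u - lam)\<^sup>2" using h by simp
      ultimately show False by linarith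
    qed
    moreover have "- lam \<le> u"
    proof (rule ccontr)
      assume "\<not> - lam \<le> u"
      then have h: "u < - lam" by simp
      have "0 \<le> 2 * (- (u + lam)) * u + (- (u + lam))\<^sup>2 + 2 * lam * \<bar>- (u + lam)\<bar>" by (rule key)
      also have "\<dots> = - ((u + lam)\<^sup>2)" using h by (simp add: power2_eq_square algebra_simps)
      finally have "(u + lam)\<^sup>2 \<le> 0" by simp
      moreover have "0 < (u + lam)\<^sup>2" using h by simp
      ultimately show False by linarith
    qed
    ultimately show ?thesis unfolding u_def by simp
  qed
  have "normInf p (SmulR p S (\<lambda>i. g i - gamma0 p S i)) \<le> lam"
    by (rule normInf_le) (use lam0 kkt G(2) in \<open>auto simp: SmulR_diff\<close>)
  moreover have "0 \<le> lam * norm1 p g" using lam0 ng by simp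
  moreover have "lam * norm1 p g \<le> 3 * (lam * norm1 p s)"
  proof -
    have a: "2 * l * norm1 p g \<le> lam * norm1 p g" using l2 ng by (simp add: mult_right_mono)
    have b: "2 * l * norm1 p s \<le> lam * norm1 p s" using l2 ns by (simp add: mult_right_mono)
    show ?thesis using Qd0 E A Xb2 a b by (simp add: abs_le_iff; linarith)
  qed
  ultimately show "normInf p (SmulR p S (\<lambda>i. g i - gamma0 p S i)) \<le> lam
          \<and> 0 \<le> lam * norm1 p g \<and> lam * norm1 p g \<le> 3 * (lam * norm1 p s)" by blast
qed

theorem lemma3p2:
  fixes p :: "nat \<Rightarrow> nat" and S :: "nat \<Rightarrow> nat \<Rightarrow> nat \<Rightarrow> real"
    and gs gL :: "nat \<Rightarrow> nat \<Rightarrow> real" and ls lL :: "nat \<Rightarrow> real"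
  assumes p_pos: "\<And>n. 0 < p n"
    and sym: "\<And>n. symmetric_mat (p n) (S n)"
    and diag: "\<And>n i. i < p n \<Longrightarrow> S n i i = 1"
    and nonsing: "\<And>n. nonsingular (p n) (S n)"
    and eig: "\<exists>c>0. \<forall>n \<mu>. is_eigenvalue (p n) (S n) \<mu> \<longrightarrow> c \<le> \<mu>"
    and elig: "eligible p S gs ls"
    and lL_gt: "\<And>n. ls n < lL n"
    and lL_lim: "(\<lambda>n. lL n * norm1 (p n) (gs n)) \<longlonglongrightarrow> 0"
    and gL_mem: "\<And>n. gL n \<in> rvec (p n)"
    and gL_min: "\<And>n c. c \<in> rvec (p n) \<Longrightarrow>
        risk (p n) (S n) (gL n) + 2 * lL n * norm1 (p n) (gL n)
          \<le> risk (p n) (S n) c + 2 * lL n * norm1 (p n) c"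
  shows "(\<lambda>n. quadS (p n) (S n) (\<lambda>i. gL n i - gs n i)) \<longlonglongrightarrow> 0
         \<and> ((\<forall>n. 2 * ls n \<le> lL n) \<longrightarrow> eligible p S gL lL)"
proof -
  obtain c where c0: "0 < c" and ceig: "\<forall>n \<mu>. is_eigenvalue (p n) (S n) \<mu> \<longrightarrow> c \<le> \<mu>"
    using eig by blast
  have E: "gs n \<in> rvec (p n)" "0 < ls n"
    "normInf (p n) (SmulR (p n) (S n) (\<lambda>i. gs n i - gamma0 (p n) (S n) i)) \<le> ls n" for n
    using elig unfolding eligible_def by auto
  have st1: "0 \<le> quadS (p n) (S n) (\<lambda>i. gL n i - gs n i)
      \<and> quadS (p n) (S n) (\<lambda>i. gL n i - gs n i) \<le> 4 * (lL n * norm1 (p n) (gs n))" for n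
    using step(1)[OF p_pos sym diag c0 _ E(1) E(2) E(3) lL_gt gL_mem gL_min] ceig by blast
  have lim4: "(\<lambda>n. 4 * (lL n * norm1 (p n) (gs n))) \<longlonglongrightarrow> 0"
    using tendsto_mult[OF tendsto_const[of 4] lL_lim] by simp
  have part1: "(\<lambda>n. quadS (p n) (S n) (\<lambda>i. gL n i - gs n i)) \<longlonglongrightarrow> 0"
    by (rule tendsto_sandwich[OF _ _ tendsto_const lim4]) (use st1 in auto)
  have part2: "eligible p S gL lL" if h: "\<forall>n. 2 * ls n \<le> lL n"
  proof -
    have st2: "normInf (p n) (SmulR (p n) (S n) (\<lambda>i. gL n i - gamma0 (p n) (S n) i)) \<le> lL n
          \<and> 0 \<le> lL n * norm1 (p n) (gL n) \<and> lL n * norm1 (p n) (gL n) \<le> 3 * (lL n * norm1 (p n) (gs n))" for n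
      using step(2)[OF p_pos sym diag c0 _ E(1) E(2) E(3) lL_gt gL_mem gL_min] ceig h by blast
    have lim3: "(\<lambda>n. 3 * (lL n * norm1 (p n) (gs n))) \<longlonglongrightarrow> 0"
      using tendsto_mult[OF tendsto_const[of 3] lL_lim] by simp
    have "(\<lambda>n. lL n * norm1 (p n) (gL n)) \<longlonglongrightarrow> 0"
      by (rule tendsto_sandwich[OF _ _ tendsto_const lim3]) (use st2 in auto)
    moreover have "0 < lL n" for n using E(2)[of n] lL_gt[of n] by linarith
    ultimately show ?thesis unfolding eligible_def using gL_mem st2 by blast
  qed
  show ?thesis using part1 part2 by blast
qed

end
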